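(* Let $X_1$ be a random variable with $\mathbb EX_1=0$, $\operatorname{Var}X_1=1$, such that $\varphi(t)=\log\mathbb Ee^{tX_1}<\infty$ for all $t\geq-\sigma_0$ for some $\sigma_0>0$, and let $I(s)=\sup_{t\geq0}(st-\varphi(t))$, $s\geq0$. Then: (i) the condition "for every $\varepsilon>0$, $\sup_{t\geq\varepsilon}\frac{\varphi(t)}{t^2/2}<1$" is equivalent to the condition "for every $\varepsilon>0$, $\inf_{s\geq\varepsilon}\frac{I(s)}{s^2/2}>1$"; (ii) for $q\in\{3,4,\ldots\}$ and $\kappa>0$, the condition $\varphi(t)=\frac{t^2}2-\kappa t^q+o(t^q)$ as $t\downarrow0$ is equivalent to the condition $I(s)=\frac{s^2}2+\kappa s^q+o(s^q)$ as $s\downarrow0$. *)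

theory Defs
  imports "HOL-Probability.Probability" "HOL-Library.Landau_Symbols"
begin

definition cgf :: "'a measure \<Rightarrow> ('a \<Rightarrow> real) \<Rightarrow> real \<Rightarrow> real" where
  "cgf M X t = ln (integral\<^sup>L M (\<lambda>x. exp (t * X x)))"

definition rate :: "'a measure \<Rightarrow> ('a \<Rightarrow> real) \<Rightarrow> real \<Rightarrow> ereal" where
  "rate M X s = (SUP t\<in>{0..}. ereal (s * t - cgf M X t))"

end

theory Submission
  imports Defs
begin


lemma cgf_props:
  fixes M :: "'a measure" and X :: "'a \<Rightarrow> real" and \<sigma>0 :: real
  assumes P: "prob_space M"
    and "X \<in> borel_measurable M"
    and IX: "integrable M X"
    and E: "prob_space.expectation M X = 0"
    and "\<sigma>0 > 0"
    and I: "\<And>t. t \<ge> - \<sigma>0 \<Longrightarrow> integrable M (\<lambda>x. exp (t * X x))"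
  shows "cgf M X 0 = 0" "\<And>t. t \<ge> 0 \<Longrightarrow> cgf M X t \<ge> 0"
    "convex_on {-\<sigma>0..} (cgf M X)"
proof -
  interpret prob_space M by fact
  show "cgf M X 0 = 0" unfolding cgf_def by (simp add: prob_space)
  have ge1: "integral\<^sup>L M (\<lambda>x. exp (t * X x)) \<ge> 1" if "t \<ge> - \<sigma>0" for t
  proof -
    have "integral\<^sup>L M (\<lambda>x. 1 + t * X x) \<le> integral\<^sup>L M (\<lambda>x. exp (t * X x))"
    proof (rule integral_mono)
      show "integrable M (\<lambda>x. 1 + t * X x)" using IX by simp
      show "integrable M (\<lambda>x. exp (t * X x))" using I that by simp
      show "1 + t * X x \<le> exp (t * X x)" for x by (rule exp_ge_add_one_self)
    qed
    moreover have "integral\<^sup>L M (\<lambda>x. 1 + t * X x) = 1"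
      using IX E by (simp add: prob_space)
    ultimately show ?thesis by simp
  qed
  show "cgf M X t \<ge> 0" if "t \<ge> 0" for t
    unfolding cgf_def using ge1[of t] that \<open>\<sigma>0 > 0\<close> by simp
  show "convex_on {-\<sigma>0..} (cgf M X)"
  proof (rule convex_onI)
    fix l t1 t2 :: real
    assume l: "0 < l" "l < 1" and t1: "t1 \<in> {-\<sigma>0..}" and t2: "t2 \<in> {-\<sigma>0..}"
    define A where "A = integral\<^sup>L M (\<lambda>x. exp (t1 * X x))"
    define B where "B = integral\<^sup>L M (\<lambda>x. exp (t2 * X x))"
    define t where "t = (1 - l) * t1 + l * t2"
    have tin: "t \<ge> - \<sigma>0"
    proof -
      have "(1 - l) * (t1 + \<sigma>0) \<ge> 0" "l * (t2 + \<sigma>0) \<ge> 0" using t1 t2 l by auto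
      thus ?thesis unfolding t_def by (simp add: algebra_simps)
    qed
    have A: "A \<ge> 1" "B \<ge> 1" using ge1 t1 t2 A_def B_def by auto
    define c where "c = (1 - l) * ln A + l * ln B"
    have pw: "exp (t * X x) * exp (- c) \<le> (1 - l) * (exp (t1 * X x) / A) + l * (exp (t2 * X x) / B)" for x
    proof -
      have "exp ((1 - l) * (t1 * X x - ln A) + l * (t2 * X x - ln B))
          \<le> (1 - l) * exp (t1 * X x - ln A) + l * exp (t2 * X x - ln B)"
        using convex_onD[OF exp_convex, of l "t1 * X x - ln A" "t2 * X x - ln B"] l by simp
      moreover have "(1 - l) * (t1 * X x - ln A) + l * (t2 * X x - ln B) = t * X x + - c"
        unfolding t_def c_def by (simp add: algebra_simps)
      ultimately show ?thesis using A by (simp add: exp_diff exp_minus divide_inverse)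
    qed
    have "integral\<^sup>L M (\<lambda>x. exp (t * X x) * exp (- c))
        \<le> integral\<^sup>L M (\<lambda>x. (1 - l) * (exp (t1 * X x) / A) + l * (exp (t2 * X x) / B))"
      using I[OF tin] I t1 t2 pw by (intro integral_mono) auto
    also have "\<dots> = (1 - l) * (A / A) + l * (B / B)"
    proof -
      have i1: "integrable M (\<lambda>x. exp (t1 * X x))" "integrable M (\<lambda>x. exp (t2 * X x))"
        using I t1 t2 by auto
      have "integral\<^sup>L M (\<lambda>x. (1 - l) * (exp (t1 * X x) / A) + l * (exp (t2 * X x) / B))
        = integral\<^sup>L M (\<lambda>x. (1 - l) * (exp (t1 * X x) / A)) + integral\<^sup>L M (\<lambda>x. l * (exp (t2 * X x) / B))"
        by (rule Bochner_Integration.integral_add) (use i1 in auto)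
      also have "\<dots> = (1 - l) * (A / A) + l * (B / B)"
        unfolding integral_mult_right_zero integral_divide_zero A_def B_def by simp
      finally show ?thesis .
    qed
    also have "\<dots> = 1" using A by simp
    finally have "integral\<^sup>L M (\<lambda>x. exp (t * X x)) * exp (- c) \<le> 1" by simp
    hence "integral\<^sup>L M (\<lambda>x. exp (t * X x)) \<le> exp c" by (simp add: exp_minus field_simps)
    hence "ln (integral\<^sup>L M (\<lambda>x. exp (t * X x))) \<le> c"
      using ge1[OF tin] ln_le_cancel_iff[of "integral\<^sup>L M (\<lambda>x. exp (t * X x))" "exp c"] by simp
    thus "cgf M X ((1 - l) *\<^sub>R t1 + l *\<^sub>R t2) \<le> (1 - l) * cgf M X t1 + l * cgf M X t2"
      unfolding cgf_def t_def c_def A_def B_def by simp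
  qed auto
qed




definition rt :: "(real \<Rightarrow> real) \<Rightarrow> real \<Rightarrow> ereal" where
  "rt \<phi> s = (SUP t\<in>{0..}. ereal (s * t - \<phi> t))"

lemma slope_sym: "((x::real) - y) / (z - w) = (y - x) / (w - z)"
proof -
  have "(y - x) / (w - z) = (- (x - y)) / (- (z - w))" by simp
  thus ?thesis by (simp only: minus_divide_divide)
qed

lemma slope_mono:
  fixes f :: "real \<Rightarrow> real"
  assumes "convex_on I f" "x \<in> I" "y \<in> I" "x < t" "t < y"
  shows "(f x - f t) / (x - t) \<le> (f t - f y) / (t - y)"
  using convex_on_slope_le[OF assms] by linarith

lemma subgrad:
  fixes \<phi> :: "real \<Rightarrow> real"
  assumes cv: "convex_on {a..} \<phi>" and at: "a < t"
  shows "\<exists>g. (\<forall>u\<ge>a. \<phi> t + g * (u - t) \<le> \<phi> u) \<and> (\<forall>u>t. g \<le> (\<phi> u - \<phi> t) / (u - t))"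
proof -
  define S where "S = (\<lambda>u. (\<phi> u - \<phi> t) / (u - t)) ` {t<..}"
  have ne: "S \<noteq> {}" unfolding S_def by auto
  have lb: "(\<phi> a - \<phi> t) / (a - t) \<le> (\<phi> u - \<phi> t) / (u - t)" if "u > t" for u
    using slope_mono[OF cv, of a u t] at that slope_sym[of "\<phi> t" "\<phi> u" t u] by auto
  have bdd: "bdd_below S" using lb unfolding S_def bdd_below_def by auto
  define g where "g = Inf S"
  have g1: "g \<le> (\<phi> u - \<phi> t) / (u - t)" if "u > t" for u
    unfolding g_def by (rule cInf_lower) (use that bdd S_def in auto)
  have g2: "(\<phi> u - \<phi> t) / (u - t) \<le> g" if "a \<le> u" "u < t" for u
    unfolding g_def
  proof (rule cInf_greatest[OF ne])
    fix x assume "x \<in> S"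
    then obtain w where w: "w > t" "x = (\<phi> w - \<phi> t) / (w - t)" unfolding S_def by auto
    show "(\<phi> u - \<phi> t) / (u - t) \<le> x"
      using slope_mono[OF cv, of u w t] that w slope_sym[of "\<phi> t" "\<phi> w" t w] by auto
  qed
  have "\<phi> t + g * (u - t) \<le> \<phi> u" if "u \<ge> a" for u
  proof (cases u t rule: linorder_cases)
    case less
    hence "(\<phi> u - \<phi> t) / (u - t) \<le> g" using g2 that by auto
    hence "g * (u - t) \<le> \<phi> u - \<phi> t" using less by (simp add: neg_divide_le_eq)
    thus ?thesis by simp
  next
    case greater
    hence "g \<le> (\<phi> u - \<phi> t) / (u - t)" using g1 by auto
    hence "g * (u - t) \<le> \<phi> u - \<phi> t" using greater by (simp add: pos_le_divide_eq)
    thus ?thesis by simp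
  qed simp
  thus ?thesis using g1 by blast
qed

lemma rt_ge: "t \<ge> 0 \<Longrightarrow> ereal (s * t - \<phi> t) \<le> rt \<phi> s"
  unfolding rt_def by (rule SUP_upper) auto

lemma rt_le: "(\<And>t. t \<ge> 0 \<Longrightarrow> s * t - \<phi> t \<le> c) \<Longrightarrow> rt \<phi> s \<le> ereal c"
  unfolding rt_def by (rule SUP_least) auto

lemma rt_nonneg: "\<phi> 0 = 0 \<Longrightarrow> rt \<phi> s \<ge> 0"
  using rt_ge[of 0 s \<phi>] by (simp add: zero_ereal_def)

lemma rt_subgrad:
  fixes \<phi> :: "real \<Rightarrow> real"
  assumes cv: "convex_on {a..} \<phi>" and a: "a < 0" and p0: "\<phi> 0 = 0"
    and pn: "\<And>t. t \<ge> 0 \<Longrightarrow> \<phi> t \<ge> 0" and t: "t > 0"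
  shows "\<exists>g. rt \<phi> g = ereal (g * t - \<phi> t) \<and> g \<ge> 0 \<and> (\<forall>u>t. g \<le> (\<phi> u - \<phi> t) / (u - t))"
proof -
  obtain g where g: "\<And>u. u \<ge> a \<Longrightarrow> \<phi> t + g * (u - t) \<le> \<phi> u"
    "\<And>u. u > t \<Longrightarrow> g \<le> (\<phi> u - \<phi> t) / (u - t)"
    using subgrad[OF cv, of t] a t by auto
  have "\<phi> t + g * (0 - t) \<le> \<phi> 0" using g(1)[of 0] a by simp
  hence "g * t \<ge> \<phi> t" using p0 by simp
  hence "g * t \<ge> 0" using pn[of t] t by simp
  hence g0: "g \<ge> 0" using t by (simp add: zero_le_mult_iff)
  have "rt \<phi> g \<le> ereal (g * t - \<phi> t)"
  proof (rule rt_le)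
    fix u :: real assume "u \<ge> 0"
    thus "g * u - \<phi> u \<le> g * t - \<phi> t" using g(1)[of u] a by (simp add: algebra_simps)
  qed
  moreover have "ereal (g * t - \<phi> t) \<le> rt \<phi> g" using rt_ge t by auto
  ultimately show ?thesis using g0 g(2) by (intro exI[of _ g]) auto
qed

lemma sup_lt1_iff:
  fixes f :: "real \<Rightarrow> real"
  shows "(SUP t\<in>{e..}. ereal (f t)) < 1 \<longleftrightarrow> (\<exists>c<1. \<forall>t\<ge>e. f t \<le> c)"
proof
  assume h: "(SUP t\<in>{e..}. ereal (f t)) < 1"
  obtain c where c: "(SUP t\<in>{e..}. ereal (f t)) < ereal c" "ereal c < 1"
    using ereal_dense2[OF h] by auto
  have "f t \<le> c" if "t \<ge> e" for t
  proof -
    have "ereal (f t) \<le> (SUP t\<in>{e..}. ereal (f t))" by (rule SUP_upper) (use that in auto)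
    hence "ereal (f t) < ereal c" using c(1) by (meson le_less_trans)
    thus ?thesis by simp
  qed
  thus "\<exists>c<1. \<forall>t\<ge>e. f t \<le> c" using c by (intro exI[of _ c]) auto
next
  assume "\<exists>c<1. \<forall>t\<ge>e. f t \<le> c"
  then obtain c where c: "c < 1" "\<And>t. t \<ge> e \<Longrightarrow> f t \<le> c" by auto
  have "(SUP t\<in>{e..}. ereal (f t)) \<le> ereal c" by (rule SUP_least) (use c in auto)
  moreover have "ereal c < 1" using c by simp
  ultimately show "(SUP t\<in>{e..}. ereal (f t)) < 1" by (meson le_less_trans)
qed

lemma inf_gt1_iff:
  fixes h :: "real \<Rightarrow> ereal"
  shows "(INF t\<in>{e..}. h t) > 1 \<longleftrightarrow> (\<exists>c>1. \<forall>t\<ge>e. h t \<ge> ereal c)"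
proof
  assume H: "(INF t\<in>{e..}. h t) > 1"
  obtain c where c: "1 < ereal c" "ereal c < (INF t\<in>{e..}. h t)"
    using ereal_dense2[OF H] by auto
  have "h t \<ge> c" if "t \<ge> e" for t
  proof -
    have "(INF t\<in>{e..}. h t) \<le> h t" by (rule INF_lower) (use that in auto)
    thus ?thesis using c by auto
  qed
  thus "\<exists>c>1. \<forall>t\<ge>e. h t \<ge> ereal c" using c by (intro exI[of _ c]) (auto simp: one_ereal_def)
next
  assume "\<exists>c>1. \<forall>t\<ge>e. h t \<ge> ereal c"
  then obtain c where c: "c > 1" "\<And>t. t \<ge> e \<Longrightarrow> h t \<ge> ereal c" by auto
  have "(INF t\<in>{e..}. h t) \<ge> ereal c" by (rule INF_greatest) (use c in auto)
  moreover have "1 < ereal c" using c by simp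
  ultimately show "(INF t\<in>{e..}. h t) > 1" by (meson less_le_trans)
qed

lemma ediv:
  assumes "x > 0" "r \<ge> 0"
  shows "r / ereal x \<ge> ereal c \<longleftrightarrow> r \<ge> ereal (c * x)"
  using assms by (cases r) (auto simp: pos_le_divide_eq)




lemma amgm1: "(c::real) > 0 \<Longrightarrow> g * t - c * g^2 / 2 \<le> t^2 / (2 * c)"
proof -
  assume c: "c > 0"
  have "0 \<le> (t - c * g)^2" by simp
  hence "c * (g * t - c * g^2 / 2) \<le> t^2 / 2" by (simp add: power2_eq_square algebra_simps)
  thus ?thesis using c by (simp add: field_simps)
qed

lemma amgm2: "0 \<le> (g::real) \<Longrightarrow> g \<le> t / 2 \<Longrightarrow> g * t - g^2 / 2 \<le> 3/4 * (t^2 / 2)"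
proof -
  assume g: "0 \<le> g" "g \<le> t / 2"
  have "(t - g) \<ge> t / 2" using g by simp
  moreover have "t / 2 \<ge> 0" using g by simp
  ultimately have "(t - g)^2 \<ge> (t/2)^2" by (simp add: power_mono)
  thus ?thesis by (simp add: power2_eq_square algebra_simps)
qed

lemma part1:
  fixes \<phi> :: "real \<Rightarrow> real"
  assumes cv: "convex_on {a..} \<phi>" and a: "a < 0" and p0: "\<phi> 0 = 0"
    and pn: "\<And>t. t \<ge> 0 \<Longrightarrow> \<phi> t \<ge> 0"
  shows "(\<forall>\<epsilon>>0. (SUP t\<in>{\<epsilon>..}. ereal (\<phi> t / (t\<^sup>2 / 2))) < 1)
            \<longleftrightarrow> (\<forall>\<epsilon>>0. (INF s\<in>{\<epsilon>..}. rt \<phi> s / ereal (s\<^sup>2 / 2)) > 1)"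
proof -
  have L: "(SUP t\<in>{\<epsilon>..}. ereal (\<phi> t / (t\<^sup>2 / 2))) < 1 \<longleftrightarrow> (\<exists>c<1. \<forall>t\<ge>\<epsilon>. \<phi> t \<le> c * (t\<^sup>2 / 2))"
    if "\<epsilon> > 0" for \<epsilon>
  proof -
    have "\<phi> t / (t\<^sup>2 / 2) \<le> c \<longleftrightarrow> \<phi> t \<le> c * (t\<^sup>2 / 2)" if "t \<ge> \<epsilon>" for t c
      using that \<open>\<epsilon> > 0\<close> by (simp add: pos_divide_le_eq)
    thus ?thesis unfolding sup_lt1_iff by (meson order.refl)
  qed
  have R: "(INF s\<in>{\<epsilon>..}. rt \<phi> s / ereal (s\<^sup>2 / 2)) > 1 \<longleftrightarrow> (\<exists>c>1. \<forall>s\<ge>\<epsilon>. rt \<phi> s \<ge> ereal (c * (s\<^sup>2 / 2)))"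
    if "\<epsilon> > 0" for \<epsilon>
  proof -
    have "rt \<phi> s / ereal (s\<^sup>2 / 2) \<ge> ereal c \<longleftrightarrow> rt \<phi> s \<ge> ereal (c * (s\<^sup>2 / 2))" if "s \<ge> \<epsilon>" for s c
      using that \<open>\<epsilon> > 0\<close> by (intro ediv rt_nonneg p0) simp
    thus ?thesis unfolding inf_gt1_iff by (meson order.refl)
  qed
  have "(\<forall>\<epsilon>>0. \<exists>c<1. \<forall>t\<ge>\<epsilon>. \<phi> t \<le> c * (t\<^sup>2 / 2)) \<longleftrightarrow> (\<forall>\<epsilon>>0. \<exists>c>1. \<forall>s\<ge>\<epsilon>. rt \<phi> s \<ge> ereal (c * (s\<^sup>2 / 2)))"
  proof (intro iffI allI impI)
    fix \<epsilon> :: real assume H: "\<forall>\<epsilon>>0. \<exists>c<1. \<forall>t\<ge>\<epsilon>. \<phi> t \<le> c * (t\<^sup>2 / 2)" and e: "\<epsilon> > 0"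
    then obtain c where c: "c < 1" "\<And>t. t \<ge> \<epsilon> \<Longrightarrow> \<phi> t \<le> c * (t\<^sup>2 / 2)" by auto
    have "rt \<phi> s \<ge> ereal ((2 - c) * (s\<^sup>2 / 2))" if "s \<ge> \<epsilon>" for s
    proof -
      have "ereal (s * s - \<phi> s) \<le> rt \<phi> s" using rt_ge[of s s \<phi>] that e by simp
      moreover have "(2 - c) * (s\<^sup>2 / 2) \<le> s * s - \<phi> s" using c(2)[OF that]
        by (simp add: power2_eq_square field_simps)
      ultimately show ?thesis by (meson ereal_less_eq(3) order.trans)
    qed
    thus "\<exists>c>1. \<forall>s\<ge>\<epsilon>. rt \<phi> s \<ge> ereal (c * (s\<^sup>2 / 2))" using c by (intro exI[of _ "2 - c"]) auto
  next
    fix \<epsilon> :: real assume H: "\<forall>\<epsilon>>0. \<exists>c>1. \<forall>s\<ge>\<epsilon>. rt \<phi> s \<ge> ereal (c * (s\<^sup>2 / 2))" and e: "\<epsilon> > 0"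
    obtain c1 where c1: "c1 > 1" "\<And>s. s \<ge> \<epsilon>/2 \<Longrightarrow> rt \<phi> s \<ge> ereal (c1 * (s\<^sup>2 / 2))"
      using H e by (meson half_gt_zero)
    define c where "c = max (1 / c1) (3/4)"
    have "\<phi> t \<le> c * (t\<^sup>2 / 2)" if t: "t \<ge> \<epsilon>" for t
    proof -
      obtain g where g: "rt \<phi> g = ereal (g * t - \<phi> t)" "g \<ge> 0"
        using rt_subgrad[OF cv a p0 pn, of t] t e by auto
      consider "g \<ge> \<epsilon>/2" | "0 < g" "g < \<epsilon>/2" | "g = 0" using g(2) by linarith
      thus ?thesis
      proof cases
        case 1
        hence "ereal (c1 * (g\<^sup>2 / 2)) \<le> ereal (g * t - \<phi> t)" using c1(2) g(1) by metis
        hence "\<phi> t \<le> g * t - c1 * g\<^sup>2 / 2" by simp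
        also have "\<dots> \<le> t\<^sup>2 / (2 * c1)" using amgm1 c1 by simp
        also have "\<dots> = (1 / c1) * (t\<^sup>2 / 2)" by simp
        also have "\<dots> \<le> c * (t\<^sup>2 / 2)" unfolding c_def by (intro mult_right_mono) auto
        finally show ?thesis .
      next
        case 2
        then obtain c' where "c' > 1" "rt \<phi> g \<ge> ereal (c' * (g\<^sup>2 / 2))" using H by (meson order.refl)
        hence "ereal (c' * (g\<^sup>2 / 2)) \<le> ereal (g * t - \<phi> t)" using g(1) by metis
        hence "\<phi> t \<le> g * t - c' * (g\<^sup>2 / 2)" by simp
        also have "\<dots> \<le> g * t - g\<^sup>2 / 2" using \<open>c' > 1\<close> using mult_right_mono[of 1 c' "g\<^sup>2"] by simp
        also have "\<dots> \<le> 3/4 * (t\<^sup>2 / 2)" using amgm2[of g t] 2 t by simp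
        also have "\<dots> \<le> c * (t\<^sup>2 / 2)" unfolding c_def by (intro mult_right_mono) auto
        finally show ?thesis .
      next
        case 3
        have "0 \<le> rt \<phi> g" using rt_nonneg p0 by auto
        hence "\<phi> t \<le> 0" using g(1) 3 by simp
        also have "0 \<le> c * (t\<^sup>2 / 2)" unfolding c_def by simp
        finally show ?thesis .
      qed
    qed
    moreover have "c < 1" unfolding c_def using c1 by simp
    ultimately show "\<exists>c<1. \<forall>t\<ge>\<epsilon>. \<phi> t \<le> c * (t\<^sup>2 / 2)" by auto
  qed
  thus ?thesis using L R by simp
qed




lemma powdiff:
  fixes x y M :: real
  assumes "0 \<le> x" "0 \<le> y" "x \<le> M" "y \<le> M"
  shows "\<bar>x ^ q - y ^ q\<bar> \<le> q * M ^ (q - 1) * \<bar>x - y\<bar>"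
proof (cases "M = 0")
  case True thus ?thesis using assms by simp
next
  case False
  hence M: "M > 0" using assms by simp
  have "\<bar>(x / M) ^ q - (y / M) ^ q\<bar> \<le> q * \<bar>x / M - y / M\<bar>"
    using norm_power_diff[of "x / M" "y / M" q] assms M by simp
  hence "M ^ q * \<bar>(x / M) ^ q - (y / M) ^ q\<bar> \<le> M ^ q * (q * \<bar>x / M - y / M\<bar>)"
    using M by (intro mult_left_mono) auto
  moreover have "M ^ q * \<bar>(x / M) ^ q - (y / M) ^ q\<bar> = \<bar>x ^ q - y ^ q\<bar>"
    using M by (simp add: power_divide diff_divide_distrib[symmetric] abs_divide)
  moreover have "M ^ q * (q * \<bar>x / M - y / M\<bar>) = q * M ^ (q - 1) * \<bar>x - y\<bar>"
  proof (cases q)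
    case 0 thus ?thesis by simp
  next
    case (Suc n)
    have "\<bar>x / M - y / M\<bar> = \<bar>x - y\<bar> / M" using M by (simp add: diff_divide_distrib[symmetric])
    thus ?thesis using M Suc by (simp add: field_simps)
  qed
  ultimately show ?thesis by simp
qed

lemma quad: "0 \<le> (A::real) \<Longrightarrow> A * \<bar>d\<bar> - d^2 / 2 \<le> A^2 / 2"
proof -
  have "0 \<le> (\<bar>d\<bar> - A)^2" by simp
  thus ?thesis by (simp add: power2_eq_square algebra_simps)
qed

lemma pow_small1:
  fixes t :: real assumes "0 \<le> t" "t \<le> 1" "q \<ge> 3"
  shows "t ^ q \<le> t^2 * t"
proof -
  have "t ^ q \<le> t ^ 3" using assms by (intro power_decreasing) auto
  thus ?thesis by (simp add: power2_eq_square power3_eq_cube)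
qed

lemma pow_small2:
  fixes t :: real assumes "0 \<le> t" "t \<le> 1" "q \<ge> 3"
  shows "t ^ (q - 1) * t ^ (q - 1) \<le> t ^ q * t"
proof -
  have "t ^ (q - 1) * t ^ (q - 1) = t ^ q * t ^ (q - 2)"
    using assms by (simp flip: power_add) (metis Nat.add_diff_assoc2 add_Suc_right diff_Suc_1 numeral_3_eq_3 one_add_one 
        le_add_diff_inverse less_eq_Suc_le nat_le_linear not_less_eq_eq numeral_2_eq_2 plus_1_eq_Suc)
  also have "t ^ (q - 2) \<le> t ^ 1" using assms by (intro power_decreasing) auto
  hence "t ^ q * t ^ (q - 2) \<le> t ^ q * t" using assms by (intro mult_left_mono) auto
  finally show ?thesis .
qed

lemma core:
  fixes a b \<kappa> \<eta> :: real
  assumes "0 < a" "a \<le> 1" "0 \<le> b" "b \<le> 2 * a" "\<kappa> \<ge> 0" "q \<ge> 3"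
    and small: "(\<kappa> * q * 2 ^ (q - 1))^2 * a \<le> \<eta>"
  shows "\<kappa> * \<bar>b ^ q - a ^ q\<bar> - (b - a)^2 / 2 \<le> (\<eta> / 2) * a ^ q"
proof -
  define C where "C = \<kappa> * q * 2 ^ (q - 1)"
  have C0: "C \<ge> 0" unfolding C_def using assms by simp
  have "\<bar>b ^ q - a ^ q\<bar> \<le> q * (2 * a) ^ (q - 1) * \<bar>b - a\<bar>"
    using assms by (intro powdiff) auto
  hence "\<kappa> * \<bar>b ^ q - a ^ q\<bar> \<le> \<kappa> * (q * (2 * a) ^ (q - 1) * \<bar>b - a\<bar>)"
    using assms by (intro mult_left_mono) auto
  also have "\<dots> = (C * a ^ (q - 1)) * \<bar>b - a\<bar>" unfolding C_def by (simp add: power_mult_distrib)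
  finally have "\<kappa> * \<bar>b ^ q - a ^ q\<bar> - (b - a)^2 / 2 \<le> (C * a ^ (q - 1)) * \<bar>b - a\<bar> - (b - a)^2 / 2"
    by simp
  also have "\<dots> \<le> (C * a ^ (q - 1))^2 / 2" using C0 assms by (intro quad) auto
  also have "\<dots> = C^2 * (a ^ (q - 1) * a ^ (q - 1)) / 2" by (simp add: power2_eq_square)
  also have "\<dots> \<le> C^2 * (a ^ q * a) / 2" using pow_small2[of a q] assms
    by (intro divide_right_mono mult_left_mono) auto
  also have "\<dots> = (C^2 * a) * a ^ q / 2" by simp
  also have "\<dots> \<le> \<eta> * a ^ q / 2" using small assms unfolding C_def
    by (intro divide_right_mono mult_right_mono) auto
  finally show ?thesis by simp
qed




lemma fwd:
  fixes \<phi> :: "real \<Rightarrow> real" and \<kappa> \<eta> :: real and q :: nat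
  assumes cv: "convex_on {a..} \<phi>" and a: "a < 0" and p0: "\<phi> 0 = 0"
    and pn: "\<And>t. t \<ge> 0 \<Longrightarrow> \<phi> t \<ge> 0" and q: "q \<ge> 3" and k: "\<kappa> > 0" and eta: "\<eta> > 0"
    and HP: "\<And>\<eta>. \<eta> > 0 \<Longrightarrow> \<exists>\<delta>>0. \<forall>t. 0 < t \<and> t < \<delta> \<longrightarrow> \<bar>\<phi> t - (t\<^sup>2 / 2 - \<kappa> * t ^ q)\<bar> \<le> \<eta> * t ^ q"
  shows "\<exists>\<delta>>0. \<forall>s. 0 < s \<and> s < \<delta> \<longrightarrow> ereal (s\<^sup>2 / 2 + \<kappa> * s ^ q - \<eta> * s ^ q) \<le> rt \<phi> s
            \<and> rt \<phi> s \<le> ereal (s\<^sup>2 / 2 + \<kappa> * s ^ q + \<eta> * s ^ q)"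
proof -
  define \<eta>' where "\<eta>' = \<eta> / 2 ^ (q + 1)"
  have e'0: "\<eta>' > 0" unfolding \<eta>'_def using eta by simp
  have e'1: "\<eta>' \<le> \<eta>"
  proof -
    have "(1::real) \<le> 2 ^ (q + 1)" by (rule one_le_power) simp
    hence "\<eta> * 1 \<le> \<eta> * 2 ^ (q + 1)" using eta by (intro mult_left_mono) auto
    thus ?thesis unfolding \<eta>'_def by (simp add: divide_le_eq del: power_Suc)
  qed
  have e'2: "\<eta>' * 2 ^ q = \<eta> / 2" unfolding \<eta>'_def by simp
  obtain \<delta>1 where d1: "\<delta>1 > 0" "\<And>t. 0 < t \<Longrightarrow> t < \<delta>1 \<Longrightarrow> \<bar>\<phi> t - (t\<^sup>2 / 2 - \<kappa> * t ^ q)\<bar> \<le> \<eta>' * t ^ q"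
    using HP[OF e'0] by auto
  define \<delta>0 where "\<delta>0 = min (min (\<delta>1 / 2) 1) (1 / (8 * (\<kappa> + \<eta>')))"
  have d0: "\<delta>0 > 0" "\<delta>0 < \<delta>1" "\<delta>0 \<le> 1" "(\<kappa> + \<eta>') * \<delta>0 \<le> 1 / 8"
  proof -
    show "\<delta>0 > 0" "\<delta>0 < \<delta>1" "\<delta>0 \<le> 1" unfolding \<delta>0_def using d1 k e'0 by auto
    have "(\<kappa> + \<eta>') * \<delta>0 \<le> (\<kappa> + \<eta>') * (1 / (8 * (\<kappa> + \<eta>')))"
      unfolding \<delta>0_def using k e'0 by (intro mult_left_mono) auto
    also have "\<dots> = 1 / 8" using k e'0 by simp
    finally show "(\<kappa> + \<eta>') * \<delta>0 \<le> 1 / 8" .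
  qed
  have lowq: "\<phi> t \<ge> t\<^sup>2 / 2 - (\<kappa> + \<eta>') * t ^ q" if "0 < t" "t \<le> \<delta>0" for t
    using d1(2)[of t] that d0 by (simp add: abs_le_iff algebra_simps)
  have tq: "(\<kappa> + \<eta>') * t ^ q \<le> t\<^sup>2 / 8" if "0 \<le> t" "t \<le> \<delta>0" for t
  proof -
    have "t ^ q \<le> t\<^sup>2 * t" using pow_small1[of t q] that d0 q by simp
    also have "\<dots> \<le> t\<^sup>2 * \<delta>0" using that by (intro mult_left_mono) auto
    finally have "(\<kappa> + \<eta>') * t ^ q \<le> (\<kappa> + \<eta>') * (t\<^sup>2 * \<delta>0)"
      using k e'0 by (intro mult_left_mono) auto
    also have "\<dots> = ((\<kappa> + \<eta>') * \<delta>0) * t\<^sup>2" by simp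
    also have "\<dots> \<le> (1/8) * t\<^sup>2" using d0 by (intro mult_right_mono) auto
    finally show ?thesis by simp
  qed
  have pd0: "\<phi> \<delta>0 > 0"
  proof -
    have "\<phi> \<delta>0 \<ge> \<delta>0\<^sup>2 / 2 - \<delta>0\<^sup>2 / 8" using lowq[of \<delta>0] tq[of \<delta>0] d0 by simp
    moreover have "\<delta>0\<^sup>2 > 0" using d0 by simp
    ultimately show ?thesis by linarith
  qed
  define m where "m = \<phi> \<delta>0 / \<delta>0"
  have m0: "m > 0" unfolding m_def using pd0 d0 by simp
  have big: "\<phi> t \<ge> m * t" if "t > \<delta>0" for t
  proof -
    have "(\<phi> 0 - \<phi> \<delta>0) / (0 - \<delta>0) \<le> (\<phi> \<delta>0 - \<phi> t) / (\<delta>0 - t)"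
      using slope_mono[OF cv, of 0 t \<delta>0] a that d0 by simp
    hence "m \<le> (\<phi> t - \<phi> \<delta>0) / (t - \<delta>0)" unfolding m_def using p0 slope_sym[of "\<phi> \<delta>0" "\<phi> t" \<delta>0 t] by simp
    hence "m * (t - \<delta>0) \<le> \<phi> t - \<phi> \<delta>0" using that by (simp add: pos_le_divide_eq)
    moreover have "m * \<delta>0 = \<phi> \<delta>0" unfolding m_def using d0 by simp
    ultimately show ?thesis by (simp add: algebra_simps)
  qed
  define C where "C = \<kappa> * q * 2 ^ (q - 1)"
  define \<delta> where "\<delta> = min (min \<delta>0 m) (\<eta> / (C\<^sup>2 + 1))"
  have "C\<^sup>2 + 1 > 0" by (simp add: add_nonneg_pos)
  hence dpos: "\<delta> > 0" unfolding \<delta>_def using d0 m0 eta by simp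
  have "ereal (s\<^sup>2 / 2 + \<kappa> * s ^ q - \<eta> * s ^ q) \<le> rt \<phi> s
            \<and> rt \<phi> s \<le> ereal (s\<^sup>2 / 2 + \<kappa> * s ^ q + \<eta> * s ^ q)" if s: "0 < s" "s < \<delta>" for s
  proof
    have sd: "s < \<delta>0" "s < m" "s < \<eta> / (C\<^sup>2 + 1)" using s unfolding \<delta>_def by auto
    have "\<bar>\<phi> s - (s\<^sup>2 / 2 - \<kappa> * s ^ q)\<bar> \<le> \<eta>' * s ^ q" using d1(2)[of s] s sd d0 by simp
    moreover have "\<eta>' * s ^ q \<le> \<eta> * s ^ q" using e'1 s by (intro mult_right_mono) auto
    ultimately have "s\<^sup>2 / 2 + \<kappa> * s ^ q - \<eta> * s ^ q \<le> s * s - \<phi> s"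
      by (simp add: abs_le_iff power2_eq_square algebra_simps)
    thus "ereal (s\<^sup>2 / 2 + \<kappa> * s ^ q - \<eta> * s ^ q) \<le> rt \<phi> s"
      using rt_ge[of s s \<phi>] s by (meson ereal_less_eq(3) order.trans less_imp_le)
  next
    have sd: "s < \<delta>0" "s < m" "s < \<eta> / (C\<^sup>2 + 1)" using s unfolding \<delta>_def by auto
    have R0: "0 \<le> s\<^sup>2 / 2 + \<kappa> * s ^ q + \<eta> * s ^ q" using s k eta by simp
    show "rt \<phi> s \<le> ereal (s\<^sup>2 / 2 + \<kappa> * s ^ q + \<eta> * s ^ q)"
    proof (rule rt_le)
      fix t :: real assume t0: "t \<ge> 0"
      consider "t = 0" | "t > \<delta>0" | "0 < t" "t \<le> \<delta>0" "t \<ge> 2 * s" | "0 < t" "t \<le> \<delta>0" "t < 2 * s"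
        using t0 by linarith
      thus "s * t - \<phi> t \<le> s\<^sup>2 / 2 + \<kappa> * s ^ q + \<eta> * s ^ q"
      proof cases
        case 1 thus ?thesis using p0 R0 by simp
      next
        case 2
        have "s * t \<le> m * t" using sd 2 d0 by (intro mult_right_mono) auto
        thus ?thesis using big[OF 2] R0 by simp
      next
        case 3
        have "s * t - \<phi> t \<le> s * t - t\<^sup>2 / 2 + t\<^sup>2 / 8" using lowq[of t] tq[of t] 3 by simp
        also have "\<dots> \<le> s\<^sup>2 / 2"
        proof -
          have "t - s \<ge> t / 2" "t / 2 \<ge> 0" using 3 s by auto
          hence "(t - s)\<^sup>2 \<ge> (t / 2)\<^sup>2" by (simp add: power_mono)
          thus ?thesis by (simp add: power2_eq_square algebra_simps)
        qed
        moreover have "\<kappa> * s ^ q \<ge> 0" "\<eta> * s ^ q \<ge> 0" using s k eta by auto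
        ultimately show ?thesis by linarith
      next
        case 4
        have Cs: "C\<^sup>2 * s \<le> \<eta>"
        proof -
          have "C\<^sup>2 * s \<le> (C\<^sup>2 + 1) * s" using s by simp
          also have "\<dots> \<le> \<eta>" using sd(3) \<open>C\<^sup>2 + 1 > 0\<close> by (simp add: less_divide_eq mult.commute)
          finally show ?thesis .
        qed
        have co: "\<kappa> * \<bar>t ^ q - s ^ q\<bar> - (t - s)\<^sup>2 / 2 \<le> (\<eta> / 2) * s ^ q"
          using core[of s t \<kappa> q \<eta>] s sd d0 4 k q Cs unfolding C_def by auto
        have "\<eta>' * t ^ q \<le> \<eta>' * (2 * s) ^ q" using 4 e'0 by (intro mult_left_mono power_mono) auto
        also have "\<dots> = (\<eta> / 2) * s ^ q" using e'2 by (simp add: power_mult_distrib)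
        finally have et: "\<eta>' * t ^ q \<le> (\<eta> / 2) * s ^ q" .
        have kt: "\<kappa> * t ^ q \<le> \<kappa> * s ^ q + \<kappa> * \<bar>t ^ q - s ^ q\<bar>"
        proof -
          have "t ^ q \<le> s ^ q + \<bar>t ^ q - s ^ q\<bar>" by linarith
          hence "\<kappa> * t ^ q \<le> \<kappa> * (s ^ q + \<bar>t ^ q - s ^ q\<bar>)" using k by (intro mult_left_mono) auto
          thus ?thesis by (simp add: distrib_left)
        qed
        have "s * t - \<phi> t \<le> s * t - t\<^sup>2 / 2 + \<kappa> * t ^ q + \<eta>' * t ^ q"
          using lowq[of t] 4 by (simp add: algebra_simps)
        also have "s * t - t\<^sup>2 / 2 = s\<^sup>2 / 2 - (t - s)\<^sup>2 / 2" by (simp add: power2_eq_square field_simps)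
        finally show ?thesis using co et kt by (simp add: algebra_simps)
      qed
    qed
  qed
  thus ?thesis using dpos by blast
qed




lemma bwd:
  fixes \<phi> :: "real \<Rightarrow> real" and \<kappa> \<eta> :: real and q :: nat
  assumes cv: "convex_on {a..} \<phi>" and a: "a < 0" and p0: "\<phi> 0 = 0"
    and pn: "\<And>t. t \<ge> 0 \<Longrightarrow> \<phi> t \<ge> 0" and q: "q \<ge> 3" and k: "\<kappa> > 0" and eta: "\<eta> > 0"
    and HI: "\<And>\<eta>. \<eta> > 0 \<Longrightarrow> \<exists>\<delta>>0. \<forall>s. 0 < s \<and> s < \<delta> \<longrightarrow>
               (\<exists>r. rt \<phi> s = ereal r \<and> \<bar>r - (s\<^sup>2 / 2 + \<kappa> * s ^ q)\<bar> \<le> \<eta> * s ^ q)"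
  shows "\<exists>\<delta>>0. \<forall>t. 0 < t \<and> t < \<delta> \<longrightarrow> \<bar>\<phi> t - (t\<^sup>2 / 2 - \<kappa> * t ^ q)\<bar> \<le> \<eta> * t ^ q"
proof -
  define \<eta>' where "\<eta>' = min (\<kappa> / 2) (\<eta> / 2 ^ (q + 1))"
  have e'0: "\<eta>' > 0" unfolding \<eta>'_def using eta k by simp
  have e'k: "\<eta>' \<le> \<kappa>" unfolding \<eta>'_def using k by simp
  have e'2: "\<eta>' * 2 ^ q \<le> \<eta> / 2"
  proof -
    have "\<eta>' * 2 ^ q \<le> (\<eta> / 2 ^ (q + 1)) * 2 ^ q" unfolding \<eta>'_def by (intro mult_right_mono) auto
    also have "\<dots> = \<eta> / 2" by simp
    finally show ?thesis .
  qed
  have e'1: "\<eta>' \<le> \<eta>"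
  proof -
    have "(1::real) \<le> 2 ^ q" by (rule one_le_power) simp
    hence "\<eta>' * 1 \<le> \<eta>' * 2 ^ q" using e'0 by (intro mult_left_mono) auto
    thus ?thesis using e'2 eta by simp
  qed
  obtain \<delta>1 where d1: "\<delta>1 > 0" "\<And>s. 0 < s \<Longrightarrow> s < \<delta>1 \<Longrightarrow>
      (\<exists>r. rt \<phi> s = ereal r \<and> \<bar>r - (s\<^sup>2 / 2 + \<kappa> * s ^ q)\<bar> \<le> \<eta>' * s ^ q)"
    using HI[OF e'0] by auto
  define \<delta>0 where "\<delta>0 = min (\<delta>1 / 2) 1"
  have d0: "\<delta>0 > 0" "\<delta>0 < \<delta>1" "\<delta>0 \<le> 1" unfolding \<delta>0_def using d1 by auto
  have Ipos: "rt \<phi> s \<ge> ereal (s\<^sup>2 / 2 + (\<kappa> - \<eta>') * s ^ q)" if sh: "0 < s" "s \<le> \<delta>0" for s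
  proof -
    obtain r where r: "rt \<phi> s = ereal r" "\<bar>r - (s\<^sup>2 / 2 + \<kappa> * s ^ q)\<bar> \<le> \<eta>' * s ^ q"
      using d1(2)[of s] sh d0 by auto
    thus ?thesis by (simp add: abs_le_iff algebra_simps)
  qed
  have Ipos2: "s\<^sup>2 / 2 + (\<kappa> - \<eta>') * s ^ q > 0" if "0 < s" for s
  proof -
    have "(\<kappa> - \<eta>') * s ^ q \<ge> 0" using e'k that by simp
    moreover have "s\<^sup>2 / 2 > 0" using that by simp
    ultimately show ?thesis by linarith
  qed
  have "\<exists>u0>0. \<phi> u0 < (\<delta>0 / 2) * u0"
  proof (rule ccontr)
    assume "\<not> (\<exists>u0>0. \<phi> u0 < (\<delta>0 / 2) * u0)"
    hence H: "\<phi> u \<ge> (\<delta>0 / 2) * u" if "u > 0" for u using that by (meson not_le)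
    have "rt \<phi> (\<delta>0 / 2) \<le> ereal 0"
    proof (rule rt_le)
      fix u :: real assume "u \<ge> 0"
      thus "\<delta>0 / 2 * u - \<phi> u \<le> 0" using H[of u] p0 by (cases "u = 0") auto
    qed
    moreover have "rt \<phi> (\<delta>0 / 2) \<ge> ereal ((\<delta>0 / 2)\<^sup>2 / 2 + (\<kappa> - \<eta>') * (\<delta>0 / 2) ^ q)"
      using Ipos[of "\<delta>0 / 2"] d0 by simp
    moreover have "(\<delta>0 / 2)\<^sup>2 / 2 + (\<kappa> - \<eta>') * (\<delta>0 / 2) ^ q > 0" using Ipos2 d0 by simp
    ultimately show False by (metis ereal_less_eq(3) leD order.trans)
  qed
  then obtain u0 where u0: "u0 > 0" "\<phi> u0 < (\<delta>0 / 2) * u0" by blast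
  define C where "C = \<kappa> * q * 2 ^ (q - 1)"
  define \<delta> where "\<delta> = min (min (u0 / 2) \<delta>1) (min 1 (min (\<eta> / (C\<^sup>2 + 1)) (1 / (2 * \<kappa>))))"
  have C1: "C\<^sup>2 + 1 > 0" by (simp add: add_nonneg_pos)
  hence dpos: "\<delta> > 0" unfolding \<delta>_def using d1 u0 eta k by simp
  have "\<bar>\<phi> t - (t\<^sup>2 / 2 - \<kappa> * t ^ q)\<bar> \<le> \<eta> * t ^ q" if t: "0 < t" "t < \<delta>" for t
  proof -
    have td: "t < u0 / 2" "t < \<delta>1" "t \<le> 1" "t < \<eta> / (C\<^sup>2 + 1)" "t < 1 / (2 * \<kappa>)"
      using t unfolding \<delta>_def by auto
    have Ct: "C\<^sup>2 * t \<le> \<eta>"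
    proof -
      have "C\<^sup>2 * t \<le> (C\<^sup>2 + 1) * t" using t by simp
      also have "\<dots> \<le> \<eta>" using td(4) C1 by (simp add: less_divide_eq mult.commute)
      finally show ?thesis .
    qed
    have tq: "\<kappa> * t ^ q \<le> t\<^sup>2 / 2"
    proof -
      have "t ^ q \<le> t\<^sup>2 * t" using pow_small1[of t q] t td q by simp
      hence "\<kappa> * t ^ q \<le> \<kappa> * (t\<^sup>2 * t)" using k by (intro mult_left_mono) auto
      also have "\<dots> = (\<kappa> * t) * t\<^sup>2" by simp
      also have "\<dots> \<le> (1/2) * t\<^sup>2"
      proof (intro mult_right_mono)
        show "\<kappa> * t \<le> 1 / 2" using td(5) k by (simp add: less_divide_eq mult.commute mult.left_commute)
      qed simp
      finally show ?thesis by simp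
    qed
    have etq: "\<eta> * t ^ q \<ge> 0" using eta t by simp
    obtain r where r: "rt \<phi> t = ereal r" "\<bar>r - (t\<^sup>2 / 2 + \<kappa> * t ^ q)\<bar> \<le> \<eta>' * t ^ q"
      using d1(2)[of t] t td by auto
    have "ereal (t * t - \<phi> t) \<le> ereal r" using rt_ge[of t t \<phi>] r t by simp
    hence "t * t - \<phi> t \<le> r" by simp
    moreover have "\<eta>' * t ^ q \<le> \<eta> * t ^ q" using e'1 t by (intro mult_right_mono) auto
    ultimately have low: "\<phi> t \<ge> t\<^sup>2 / 2 - \<kappa> * t ^ q - \<eta> * t ^ q" using r(2)
      by (simp add: abs_le_iff power2_eq_square algebra_simps)
    obtain g where g: "rt \<phi> g = ereal (g * t - \<phi> t)" "g \<ge> 0"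
      "\<And>u. u > t \<Longrightarrow> g \<le> (\<phi> u - \<phi> t) / (u - t)"
      using rt_subgrad[OF cv a p0 pn t(1)] by auto
    have gd: "g < \<delta>0"
    proof -
      have "g \<le> (\<phi> u0 - \<phi> t) / (u0 - t)" using g(3)[of u0] td u0 by simp
      also have "\<dots> \<le> \<phi> u0 / (u0 - t)" using pn[of t] t td by (intro divide_right_mono) auto
      also have "\<dots> \<le> \<phi> u0 / (u0 / 2)" using pn[of u0] u0 td t by (intro divide_left_mono) auto
      also have "\<dots> < (\<delta>0 / 2 * u0) / (u0 / 2)" using u0 by (intro divide_strict_right_mono) auto
      also have "\<dots> = \<delta>0" using u0 by simp
      finally show ?thesis .
    qed
    have up: "\<phi> t \<le> t\<^sup>2 / 2 - \<kappa> * t ^ q + \<eta> * t ^ q"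
    proof -
      consider "g = 0" | "g > 2 * t" | "0 < g" "g \<le> 2 * t" using g(2) by linarith
      thus ?thesis
      proof cases
        case 1
        have "0 \<le> rt \<phi> g" using rt_nonneg p0 by auto
        hence "\<phi> t \<le> 0" using g(1) 1 by simp
        thus ?thesis using tq etq by linarith
      next
        case 2
        have "ereal (g\<^sup>2 / 2 + (\<kappa> - \<eta>') * g ^ q) \<le> ereal (g * t - \<phi> t)"
          using Ipos[of g] g(1) 2 t gd by simp
        hence "\<phi> t \<le> g * t - g\<^sup>2 / 2 - (\<kappa> - \<eta>') * g ^ q" by simp
        moreover have "(\<kappa> - \<eta>') * g ^ q \<ge> 0" using e'k g(2) by simp
        moreover have "g * t \<le> g * (g / 2)" using 2 g(2) by (intro mult_left_mono) auto
        ultimately have "\<phi> t \<le> 0" by (simp add: power2_eq_square)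
        thus ?thesis using tq etq by linarith
      next
        case 3
        have "ereal (g\<^sup>2 / 2 + (\<kappa> - \<eta>') * g ^ q) \<le> ereal (g * t - \<phi> t)"
          using Ipos[of g] g(1) 3 gd by simp
        hence p1: "\<phi> t \<le> g * t - g\<^sup>2 / 2 - \<kappa> * g ^ q + \<eta>' * g ^ q" by (simp add: algebra_simps)
        have co: "\<kappa> * \<bar>g ^ q - t ^ q\<bar> - (g - t)\<^sup>2 / 2 \<le> (\<eta> / 2) * t ^ q"
          using core[of t g \<kappa> q \<eta>] t td 3 k q Ct unfolding C_def by auto
        have "\<eta>' * g ^ q \<le> \<eta>' * (2 * t) ^ q" using 3 e'0 by (intro mult_left_mono power_mono) auto
        also have "\<dots> = (\<eta>' * 2 ^ q) * t ^ q" by (simp add: power_mult_distrib)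
        also have "\<dots> \<le> (\<eta> / 2) * t ^ q" using e'2 t by (intro mult_right_mono) auto
        finally have et: "\<eta>' * g ^ q \<le> (\<eta> / 2) * t ^ q" .
        have kg: "- (\<kappa> * g ^ q) \<le> - (\<kappa> * t ^ q) + \<kappa> * \<bar>g ^ q - t ^ q\<bar>"
        proof -
          have "t ^ q \<le> g ^ q + \<bar>g ^ q - t ^ q\<bar>" by linarith
          hence "\<kappa> * t ^ q \<le> \<kappa> * (g ^ q + \<bar>g ^ q - t ^ q\<bar>)" using k by (intro mult_left_mono) auto
          thus ?thesis by (simp add: distrib_left)
        qed
        have "g * t - g\<^sup>2 / 2 = t\<^sup>2 / 2 - (g - t)\<^sup>2 / 2" by (simp add: power2_eq_square field_simps)
        thus ?thesis using p1 co et kg by linarith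
      qed
    qed
    show ?thesis using low up by (simp add: abs_le_iff)
  qed
  thus ?thesis using dpos by blast
qed




lemma o_iff:
  fixes f :: "real \<Rightarrow> real"
  shows "f \<in> o[at_right 0](\<lambda>t. t ^ q) \<longleftrightarrow> (\<forall>\<eta>>0. \<exists>\<delta>>0. \<forall>t. 0 < t \<and> t < \<delta> \<longrightarrow> \<bar>f t\<bar> \<le> \<eta> * t ^ q)"
proof
  assume H: "f \<in> o[at_right 0](\<lambda>t. t ^ q)"
  show "\<forall>\<eta>>0. \<exists>\<delta>>0. \<forall>t. 0 < t \<and> t < \<delta> \<longrightarrow> \<bar>f t\<bar> \<le> \<eta> * t ^ q"
  proof (intro allI impI)
    fix \<eta> :: real assume "\<eta> > 0"
    from landau_o.smallD[OF H this] obtain b where "b > 0" "\<And>y. y > 0 \<Longrightarrow> y < b \<Longrightarrow> norm (f y) \<le> \<eta> * norm (y ^ q)"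
      unfolding eventually_at_right_field by auto
    thus "\<exists>\<delta>>0. \<forall>t. 0 < t \<and> t < \<delta> \<longrightarrow> \<bar>f t\<bar> \<le> \<eta> * t ^ q" by (intro exI[of _ b]) auto
  qed
next
  assume H: "\<forall>\<eta>>0. \<exists>\<delta>>0. \<forall>t. 0 < t \<and> t < \<delta> \<longrightarrow> \<bar>f t\<bar> \<le> \<eta> * t ^ q"
  show "f \<in> o[at_right 0](\<lambda>t. t ^ q)"
  proof (rule landau_o.smallI)
    fix c :: real assume "c > 0"
    then obtain \<delta> where "\<delta> > 0" "\<And>t. 0 < t \<Longrightarrow> t < \<delta> \<Longrightarrow> \<bar>f t\<bar> \<le> c * t ^ q" using H by blast
    thus "eventually (\<lambda>x. norm (f x) \<le> c * norm (x ^ q)) (at_right 0)"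
      unfolding eventually_at_right_field by (intro exI[of _ \<delta>]) auto
  qed
qed

lemma sandw: "ereal L \<le> x \<Longrightarrow> x \<le> ereal U \<Longrightarrow> x = ereal (real_of_ereal x) \<and> L \<le> real_of_ereal x \<and> real_of_ereal x \<le> U"
  by (cases x) auto

lemma part2:
  fixes \<phi> :: "real \<Rightarrow> real" and \<kappa> :: real and q :: nat
  assumes cv: "convex_on {a..} \<phi>" and a: "a < 0" and p0: "\<phi> 0 = 0"
    and pn: "\<And>t. t \<ge> 0 \<Longrightarrow> \<phi> t \<ge> 0" and q: "q \<ge> 3" and k: "\<kappa> > 0"
  shows "(\<lambda>t. \<phi> t - (t\<^sup>2 / 2 - \<kappa> * t ^ q)) \<in> o[at_right 0](\<lambda>t. t ^ q)
         \<longleftrightarrow> ((\<forall>\<^sub>F s in at_right 0. rt \<phi> s \<noteq> \<infinity>) \<and>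
              (\<lambda>s. real_of_ereal (rt \<phi> s) - (s\<^sup>2 / 2 + \<kappa> * s ^ q)) \<in> o[at_right 0](\<lambda>s. s ^ q))"
proof
  assume "(\<lambda>t. \<phi> t - (t\<^sup>2 / 2 - \<kappa> * t ^ q)) \<in> o[at_right 0](\<lambda>t. t ^ q)"
  hence HP: "\<And>\<eta>. \<eta> > 0 \<Longrightarrow> \<exists>\<delta>>0. \<forall>t. 0 < t \<and> t < \<delta> \<longrightarrow> \<bar>\<phi> t - (t\<^sup>2 / 2 - \<kappa> * t ^ q)\<bar> \<le> \<eta> * t ^ q"
    unfolding o_iff by blast
  note F = fwd[OF cv a p0 pn q k _ HP]
  obtain \<delta> where d: "\<delta> > 0" "\<And>s. 0 < s \<Longrightarrow> s < \<delta> \<Longrightarrow> rt \<phi> s \<le> ereal (s\<^sup>2 / 2 + \<kappa> * s ^ q + 1 * s ^ q)"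
    using F[of 1] by auto
  have "\<forall>\<^sub>F s in at_right 0. rt \<phi> s \<noteq> \<infinity>"
    unfolding eventually_at_right_field using d by (intro exI[of _ \<delta>]) (auto dest!: d(2))
  moreover have "(\<lambda>s. real_of_ereal (rt \<phi> s) - (s\<^sup>2 / 2 + \<kappa> * s ^ q)) \<in> o[at_right 0](\<lambda>s. s ^ q)"
    unfolding o_iff
  proof (intro allI impI)
    fix \<eta> :: real assume "\<eta> > 0"
    then obtain \<delta> where d: "\<delta> > 0" "\<And>s. 0 < s \<Longrightarrow> s < \<delta> \<Longrightarrow>
         ereal (s\<^sup>2 / 2 + \<kappa> * s ^ q - \<eta> * s ^ q) \<le> rt \<phi> s \<and> rt \<phi> s \<le> ereal (s\<^sup>2 / 2 + \<kappa> * s ^ q + \<eta> * s ^ q)"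
      using F by blast
    show "\<exists>\<delta>>0. \<forall>t. 0 < t \<and> t < \<delta> \<longrightarrow> \<bar>real_of_ereal (rt \<phi> t) - (t\<^sup>2 / 2 + \<kappa> * t ^ q)\<bar> \<le> \<eta> * t ^ q"
    proof (intro exI[of _ \<delta>] conjI allI impI)
      fix t assume "0 < t \<and> t < \<delta>"
      with d(2)[of t] have "ereal (t\<^sup>2 / 2 + \<kappa> * t ^ q - \<eta> * t ^ q) \<le> rt \<phi> t"
         "rt \<phi> t \<le> ereal (t\<^sup>2 / 2 + \<kappa> * t ^ q + \<eta> * t ^ q)" by auto
      from sandw[OF this] show "\<bar>real_of_ereal (rt \<phi> t) - (t\<^sup>2 / 2 + \<kappa> * t ^ q)\<bar> \<le> \<eta> * t ^ q"
        by (simp add: abs_le_iff)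
    qed (use d in auto)
  qed
  ultimately show "(\<forall>\<^sub>F s in at_right 0. rt \<phi> s \<noteq> \<infinity>) \<and>
              (\<lambda>s. real_of_ereal (rt \<phi> s) - (s\<^sup>2 / 2 + \<kappa> * s ^ q)) \<in> o[at_right 0](\<lambda>s. s ^ q)" ..
next
  assume H: "(\<forall>\<^sub>F s in at_right 0. rt \<phi> s \<noteq> \<infinity>) \<and>
              (\<lambda>s. real_of_ereal (rt \<phi> s) - (s\<^sup>2 / 2 + \<kappa> * s ^ q)) \<in> o[at_right 0](\<lambda>s. s ^ q)"
  then obtain b where b: "b > 0" "\<And>s. s > 0 \<Longrightarrow> s < b \<Longrightarrow> rt \<phi> s \<noteq> \<infinity>"
    unfolding eventually_at_right_field by auto
  have O: "\<forall>\<eta>>0. \<exists>\<delta>>0. \<forall>t. 0 < t \<and> t < \<delta> \<longrightarrow> \<bar>real_of_ereal (rt \<phi> t) - (t\<^sup>2 / 2 + \<kappa> * t ^ q)\<bar> \<le> \<eta> * t ^ q"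
    using H unfolding o_iff by blast
  have HI: "\<exists>\<delta>>0. \<forall>s. 0 < s \<and> s < \<delta> \<longrightarrow>
               (\<exists>r. rt \<phi> s = ereal r \<and> \<bar>r - (s\<^sup>2 / 2 + \<kappa> * s ^ q)\<bar> \<le> \<eta> * s ^ q)" if eta: "\<eta> > 0" for \<eta>
  proof -
    obtain \<delta> where d: "\<delta> > 0" "\<And>t. 0 < t \<Longrightarrow> t < \<delta> \<Longrightarrow> \<bar>real_of_ereal (rt \<phi> t) - (t\<^sup>2 / 2 + \<kappa> * t ^ q)\<bar> \<le> \<eta> * t ^ q"
      using O eta by blast
    show ?thesis
    proof (rule exI[of _ "min b \<delta>"], intro conjI allI impI)
      fix s assume s: "0 < s \<and> s < min b \<delta>"
      have "rt \<phi> s \<noteq> \<infinity>" using b s by auto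
      moreover have "rt \<phi> s \<ge> 0" using rt_nonneg p0 by auto
      ultimately have "rt \<phi> s = ereal (real_of_ereal (rt \<phi> s))" by (cases "rt \<phi> s") auto
      thus "\<exists>r. rt \<phi> s = ereal r \<and> \<bar>r - (s\<^sup>2 / 2 + \<kappa> * s ^ q)\<bar> \<le> \<eta> * s ^ q"
        using d(2)[of s] s by auto
    qed (use b d in auto)
  qed
  show "(\<lambda>t. \<phi> t - (t\<^sup>2 / 2 - \<kappa> * t ^ q)) \<in> o[at_right 0](\<lambda>t. t ^ q)"
    unfolding o_iff using bwd[OF cv a p0 pn q k _ HI] by blast
qed


theorem proposition4p1:
  fixes M :: "'a measure" and X :: "'a \<Rightarrow> real" and \<sigma>0 :: real
  assumes "prob_space M"
    and "X \<in> borel_measurable M"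
    and "integrable M X"
    and "prob_space.expectation M X = 0"
    and "prob_space.variance M X = 1"
    and "\<sigma>0 > 0"
    and "\<And>t. t \<ge> - \<sigma>0 \<Longrightarrow> integrable M (\<lambda>x. exp (t * X x))"
  shows "((\<forall>\<epsilon>>0. (SUP t\<in>{\<epsilon>..}. ereal (cgf M X t / (t\<^sup>2 / 2))) < 1)
            \<longleftrightarrow> (\<forall>\<epsilon>>0. (INF s\<in>{\<epsilon>..}. rate M X s / ereal (s\<^sup>2 / 2)) > 1))
         \<and> (\<forall>(q::nat) (\<kappa>::real). q \<ge> 3 \<longrightarrow> \<kappa> > 0 \<longrightarrow>
              ((\<lambda>t. cgf M X t - (t\<^sup>2 / 2 - \<kappa> * t ^ q)) \<in> o[at_right 0](\<lambda>t. t ^ q)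
               \<longleftrightarrow> ((\<forall>\<^sub>F s in at_right 0. rate M X s \<noteq> \<infinity>) \<and>
                    (\<lambda>s. real_of_ereal (rate M X s) - (s\<^sup>2 / 2 + \<kappa> * s ^ q))
                      \<in> o[at_right 0](\<lambda>s. s ^ q))))"
proof -
  note P = cgf_props[OF assms(1,2,3,4,6,7)]
  have re: "rate M X = rt (cgf M X)" by (simp add: fun_eq_iff rate_def rt_def)
  have a: "- \<sigma>0 < 0" using assms(6) by simp
  show ?thesis unfolding re
    using part1[OF P(3) a P(1) P(2)] part2[OF P(3) a P(1) P(2)] by blast
qed

end
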